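(* Let $n \ge 3$ be odd and let $T$ be the $n$-vertex tree obtained from the star $K_{1,(n-1)/2}$ by subdividing each edge exactly once (by one new vertex). Then $$\chi_{2K_2}(T) = \left\lceil \sqrt{n - \tfrac34} + \tfrac12 \right\rceil.$$
   Context: All graphs are finite and simple. For a fixed bipartite graph $H$, a proper vertex coloring of a graph $G$ is called an $H$-avoiding coloring if for any two color classes, the subgraph of $G$ induced by their union contains no induced subgraph isomorphic to $H$. $\chi_H(G)$ denotes the minimum number of colors in an $H$-avoiding coloring of $G$. $2K_2$ is the disjoint union of two edges; $K_{1,m}$ is the star with $m$ leaves. *)

theory Defs
  imports Complex_Main
begin

text \<open>Graphs are given by a vertex set V and a symmetric irreflexive edge relation E.\<close>

definition has_induced_copy ::
  "'b set \<Rightarrow> ('b \<Rightarrow> 'b \<Rightarrow> bool) \<Rightarrow> 'a set \<Rightarrow> ('a \<Rightarrow> 'a \<Rightarrow> bool) \<Rightarrow> bool" where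
  "has_induced_copy VH EH S E \<longleftrightarrow>
     (\<exists>f. inj_on f VH \<and> f ` VH \<subseteq> S \<and> (\<forall>u\<in>VH. \<forall>v\<in>VH. EH u v \<longleftrightarrow> E (f u) (f v)))"

definition proper_coloring :: "'a set \<Rightarrow> ('a \<Rightarrow> 'a \<Rightarrow> bool) \<Rightarrow> ('a \<Rightarrow> nat) \<Rightarrow> bool" where
  "proper_coloring V E c \<longleftrightarrow> (\<forall>u\<in>V. \<forall>v\<in>V. E u v \<longrightarrow> c u \<noteq> c v)"

definition H_avoiding_coloring ::
  "'b set \<Rightarrow> ('b \<Rightarrow> 'b \<Rightarrow> bool) \<Rightarrow> 'a set \<Rightarrow> ('a \<Rightarrow> 'a \<Rightarrow> bool) \<Rightarrow> ('a \<Rightarrow> nat) \<Rightarrow> bool" where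
  "H_avoiding_coloring VH EH V E c \<longleftrightarrow> proper_coloring V E c \<and>
     (\<forall>i j. i \<noteq> j \<longrightarrow> \<not> has_induced_copy VH EH {v \<in> V. c v = i \<or> c v = j} E)"

definition chi_H ::
  "'b set \<Rightarrow> ('b \<Rightarrow> 'b \<Rightarrow> bool) \<Rightarrow> 'a set \<Rightarrow> ('a \<Rightarrow> 'a \<Rightarrow> bool) \<Rightarrow> nat" where
  "chi_H VH EH V E = (LEAST k. \<exists>c. c ` V \<subseteq> {..<k} \<and> H_avoiding_coloring VH EH V E c)"

definition twoK2_V :: "nat set" where "twoK2_V = {0,1,2,3}"
definition twoK2_E :: "nat \<Rightarrow> nat \<Rightarrow> bool" where
  "twoK2_E u v \<longleftrightarrow> {u, v} = {0, 1} \<or> {u, v} = {2, 3}"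

text \<open>Star K_{1,k} with each edge subdivided once: center 0, middle vertices 1..k,
  leaves k+1..2k, edges 0--i and i--(i+k) for 1 <= i <= k.\<close>
definition sub_star_V :: "nat \<Rightarrow> nat set" where "sub_star_V k = {..2*k}"
definition sub_star_E :: "nat \<Rightarrow> nat \<Rightarrow> nat \<Rightarrow> bool" where
  "sub_star_E k u v \<longleftrightarrow>
     (u = 0 \<and> 1 \<le> v \<and> v \<le> k) \<or> (v = 0 \<and> 1 \<le> u \<and> u \<le> k) \<or>
     (1 \<le> u \<and> u \<le> k \<and> v = u + k) \<or> (1 \<le> v \<and> v \<le> k \<and> u = v + k)"

end

theory Submission
  imports Defs
begin

lemma twoK2_E_iff: "twoK2_E u v \<longleftrightarrow> (u=0\<and>v=1) \<or> (u=1\<and>v=0) \<or> (u=2\<and>v=3) \<or> (u=3\<and>v=2)"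
  unfolding twoK2_E_def by (auto simp: doubleton_eq_iff)

definition S2 :: "nat \<Rightarrow> nat set set" where
  "S2 j = {B. B \<subseteq> {..<j} \<and> card B = 2}"

lemma card_S2: "card (S2 j) = j choose 2"
  unfolding S2_def using n_subsets[of "{..<j}" 2] by simp

lemma finite_S2: "finite (S2 j)"
  unfolding S2_def by (rule finite_subset[of _ "Pow {..<j}"]) auto

lemma lower_aux:
  assumes av: "H_avoiding_coloring twoK2_V twoK2_E (sub_star_V K) (sub_star_E K) c"
    and i: "1 \<le> i" "i \<le> K" and i': "1 \<le> i'" "i' \<le> K" and ne: "i \<noteq> i'"
    and eq: "{c i, c (i+K)} = {c i', c (i'+K)}"
  shows False
proof -
  have pc: "proper_coloring (sub_star_V K) (sub_star_E K) c" using av unfolding H_avoiding_coloring_def by blast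
  have ab: "c i \<noteq> c (i+K)" proof -
    have "i \<in> sub_star_V K" "i+K \<in> sub_star_V K" "sub_star_E K i (i+K)"
      using i unfolding sub_star_V_def sub_star_E_def by auto
    then show ?thesis using pc unfolding proper_coloring_def by blast
  qed
  define f where "f = (\<lambda>x::nat. if x = 0 then i else if x = 1 then i+K else if x = 2 then i' else i'+K)"
  have "has_induced_copy twoK2_V twoK2_E {v \<in> sub_star_V K. c v = c i \<or> c v = c (i+K)} (sub_star_E K)"
    unfolding has_induced_copy_def
  proof (intro exI conjI)
    show "inj_on f twoK2_V" unfolding inj_on_def twoK2_V_def f_def using i i' ne by auto
    have "c i' \<in> {c i, c (i+K)}" "c (i'+K) \<in> {c i, c (i+K)}" using eq by auto
    then show "f ` twoK2_V \<subseteq> {v \<in> sub_star_V K. c v = c i \<or> c v = c (i+K)}"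
      unfolding twoK2_V_def f_def sub_star_V_def using i i' by auto
    have e1: "sub_star_E K i (i+K)" "sub_star_E K (i+K) i" "sub_star_E K i' (i'+K)" "sub_star_E K (i'+K) i'"
      using i i' unfolding sub_star_E_def by auto
    have n1: "\<not> sub_star_E K x x" for x unfolding sub_star_E_def by auto
    have n2: "\<not> sub_star_E K i i'" "\<not> sub_star_E K i' i" "\<not> sub_star_E K i (i'+K)" "\<not> sub_star_E K (i'+K) i"
       "\<not> sub_star_E K (i+K) i'" "\<not> sub_star_E K i' (i+K)" "\<not> sub_star_E K (i+K) (i'+K)" "\<not> sub_star_E K (i'+K) (i+K)"
      using i i' ne unfolding sub_star_E_def by auto
    show "\<forall>u\<in>twoK2_V. \<forall>v\<in>twoK2_V. twoK2_E u v = sub_star_E K (f u) (f v)"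
      unfolding twoK2_V_def f_def twoK2_E_iff using e1 n1 n2 by simp
  qed
  then show False using av ab unfolding H_avoiding_coloring_def by blast
qed

lemma lower:
  assumes av: "H_avoiding_coloring twoK2_V twoK2_E (sub_star_V K) (sub_star_E K) c"
    and rng: "c ` sub_star_V K \<subseteq> {..<j}"
  shows "K \<le> j choose 2"
proof -
  have pc: "proper_coloring (sub_star_V K) (sub_star_E K) c" using av unfolding H_avoiding_coloring_def by blast
  let ?g = "\<lambda>i. {c i, c (i+K)}"
  have "?g ` {1..K} \<subseteq> S2 j"
  proof
    fix B assume "B \<in> ?g ` {1..K}"
    then obtain i where i: "1 \<le> i" "i \<le> K" and B: "B = ?g i" by auto
    have ab: "c i \<noteq> c (i+K)" proof -
    have "i \<in> sub_star_V K" "i+K \<in> sub_star_V K" "sub_star_E K i (i+K)"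
      using i unfolding sub_star_V_def sub_star_E_def by auto
    then show ?thesis using pc unfolding proper_coloring_def by blast
  qed
    have "i \<in> sub_star_V K" "i+K \<in> sub_star_V K" using i unfolding sub_star_V_def by auto
    then have "c i < j" "c (i+K) < j" using rng by auto
    then show "B \<in> S2 j" unfolding S2_def B using ab by auto
  qed
  moreover have "inj_on ?g {1..K}"
  proof (rule inj_onI)
    fix x y assume "x \<in> {1..K}" "y \<in> {1..K}" "?g x = ?g y"
    then show "x = y" using lower_aux[OF av, of x y] by auto
  qed
  ultimately have "card {1..K} \<le> card (S2 j)"
    using card_inj_on_le[OF _ _ finite_S2] by blast
  then show ?thesis using card_S2 by simp
qed


lemma S2_facts:
  assumes "B \<in> S2 m"
  shows "Min B < Max B" "Max B < m" "{Min B, Max B} = B" "finite B" "card B = 2"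
proof -
  obtain a b where B: "B = {a,b}" "a \<noteq> b" using assms unfolding S2_def card_2_iff by blast
  have ab: "a < m" "b < m" using assms B unfolding S2_def by auto
  show "Min B < Max B" "Max B < m" "{Min B, Max B} = B" using B ab by (auto simp: min_def max_def)
  show "finite B" using B by simp
  show "card B = 2" using assms unfolding S2_def by simp
qed

lemma edge_cases:
  assumes "sub_star_E K u v"
  shows "u = 0 \<or> v = 0 \<or> (\<exists>i. 1 \<le> i \<and> i \<le> K \<and> {u,v} = {i,i+K})"
  using assms unfolding sub_star_E_def by auto

lemma edge0: "1 \<le> i \<Longrightarrow> i \<le> K \<Longrightarrow> sub_star_E K 0 i \<and> sub_star_E K i 0"
  unfolding sub_star_E_def by auto

lemma two_pendant:
  assumes e: "sub_star_E K p q" "sub_star_E K r s"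
    and ne: "\<not> sub_star_E K p r" "\<not> sub_star_E K p s" "\<not> sub_star_E K q r" "\<not> sub_star_E K q s"
    and d: "p \<noteq> r" "p \<noteq> s" "q \<noteq> r" "q \<noteq> s"
  shows "\<exists>i j. 1 \<le> i \<and> i \<le> K \<and> 1 \<le> j \<and> j \<le> K \<and> {p,q} = {i,i+K} \<and> {r,s} = {j,j+K}"
proof -
  have irr: "\<not> sub_star_E K x x" for x unfolding sub_star_E_def by auto
  have pq: "p \<noteq> q" "r \<noteq> s" using e irr by metis+
  have "p \<noteq> 0 \<and> q \<noteq> 0"
  proof (rule ccontr)
    assume "\<not> (p \<noteq> 0 \<and> q \<noteq> 0)"
    then have z: "p = 0 \<or> q = 0" by blast
    then have "r \<noteq> 0" "s \<noteq> 0" using d by auto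
    then obtain j where j: "1 \<le> j" "j \<le> K" "{r,s} = {j,j+K}" using edge_cases[OF e(2)] by blast
    then have "r = j \<or> s = j" by (auto simp: doubleton_eq_iff)
    then show False using z edge0[OF j(1,2)] ne by auto
  qed
  moreover have "r \<noteq> 0 \<and> s \<noteq> 0"
  proof (rule ccontr)
    assume "\<not> (r \<noteq> 0 \<and> s \<noteq> 0)"
    then have z: "r = 0 \<or> s = 0" by blast
    then have "p \<noteq> 0" "q \<noteq> 0" using d by auto
    then obtain j where j: "1 \<le> j" "j \<le> K" "{p,q} = {j,j+K}" using edge_cases[OF e(1)] by blast
    then have "p = j \<or> q = j" by (auto simp: doubleton_eq_iff)
    moreover have "sub_star_E K x y \<Longrightarrow> sub_star_E K y x" for x y unfolding sub_star_E_def by auto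
    ultimately show False using z edge0[OF j(1,2)] ne by metis
  qed
  ultimately show ?thesis using edge_cases[OF e(1)] edge_cases[OF e(2)] by blast
qed

lemma upper:
  assumes K: "1 \<le> K" and m: "K \<le> m choose 2"
  shows "\<exists>c. c ` sub_star_V K \<subseteq> {..<m} \<and> H_avoiding_coloring twoK2_V twoK2_E (sub_star_V K) (sub_star_E K) c"
proof -
  have "card {1..K} \<le> card (S2 m)" using m card_S2 by simp
  then obtain h where h: "h ` {1..K} \<subseteq> S2 m" "inj_on h {1..K}"
    using card_le_inj[OF _ finite_S2] by blast
  define c where "c v = (if v = 0 then 0 else if v \<le> K then Max (h v) else Min (h (v - K)))" for v
  have hi: "h i \<in> S2 m" if "1 \<le> i" "i \<le> K" for i using h that by auto
  have ci: "c i = Max (h i)" "c (i+K) = Min (h i)" if "1 \<le> i" "i \<le> K" for i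
    using that unfolding c_def by auto
  have cset: "{c i, c (i+K)} = h i" if "1 \<le> i" "i \<le> K" for i
    using ci[OF that] S2_facts(3)[OF hi[OF that]] by auto
  have mpos: "0 < m" using S2_facts(2)[OF hi[of 1]] K by auto
  have rng: "c ` sub_star_V K \<subseteq> {..<m}"
  proof
    fix y assume "y \<in> c ` sub_star_V K"
    then obtain v where v: "v \<le> 2*K" "y = c v" unfolding sub_star_V_def by auto
    show "y \<in> {..<m}"
    proof (cases "v = 0")
      case True then show ?thesis using v mpos unfolding c_def by simp
    next
      case False
      show ?thesis
      proof (cases "v \<le> K")
        case True
        then show ?thesis using False v ci(1)[of v] S2_facts(2)[OF hi[of v]] by simp
      next
        case F2: False
        then have "v = (v - K) + K" "1 \<le> v - K" "v - K \<le> K" using v by auto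
        then show ?thesis using v ci(2)[of "v-K"] S2_facts(1,2)[OF hi[of "v-K"]] by (metis lessThan_iff order.strict_trans)
      qed
    qed
  qed
  have proper: "proper_coloring (sub_star_V K) (sub_star_E K) c"
    unfolding proper_coloring_def
  proof (intro ballI impI)
    fix u v assume uv: "u \<in> sub_star_V K" "v \<in> sub_star_V K" "sub_star_E K u v"
    have a: "c i \<noteq> c 0" "c i \<noteq> c (i+K)" if "1 \<le> i" "i \<le> K" for i
      using ci[OF that] S2_facts(1)[OF hi[OF that]] unfolding c_def by auto
    from uv(3) show "c u \<noteq> c v" unfolding sub_star_E_def using a by (metis add.commute)
  qed
  have avoid: "\<not> has_induced_copy twoK2_V twoK2_E {v \<in> sub_star_V K. c v = x \<or> c v = y} (sub_star_E K)"
    if xy: "x \<noteq> y" for x y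
  proof
    assume "has_induced_copy twoK2_V twoK2_E {v \<in> sub_star_V K. c v = x \<or> c v = y} (sub_star_E K)"
    then obtain f where f: "inj_on f twoK2_V" "f ` twoK2_V \<subseteq> {v \<in> sub_star_V K. c v = x \<or> c v = y}"
      "\<forall>u\<in>twoK2_V. \<forall>v\<in>twoK2_V. twoK2_E u v \<longleftrightarrow> sub_star_E K (f u) (f v)"
      unfolding has_induced_copy_def by blast
    have V: "0 \<in> twoK2_V" "1 \<in> twoK2_V" "2 \<in> twoK2_V" "3 \<in> twoK2_V" unfolding twoK2_V_def by auto
    have E: "sub_star_E K (f 0) (f 1)" "sub_star_E K (f 2) (f 3)"
      "\<not> sub_star_E K (f 0) (f 2)" "\<not> sub_star_E K (f 0) (f 3)"
      "\<not> sub_star_E K (f 1) (f 2)" "\<not> sub_star_E K (f 1) (f 3)"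
      using f(3)[rule_format, OF V(1) V(2)] f(3)[rule_format, OF V(3) V(4)]
        f(3)[rule_format, OF V(1) V(3)] f(3)[rule_format, OF V(1) V(4)]
        f(3)[rule_format, OF V(2) V(3)] f(3)[rule_format, OF V(2) V(4)]
      by (simp_all add: twoK2_E_iff)
    have D: "f 0 \<noteq> f 2" "f 0 \<noteq> f 3" "f 1 \<noteq> f 2" "f 1 \<noteq> f 3"
      using inj_onD[OF f(1) _ V(1) V(3)] inj_onD[OF f(1) _ V(1) V(4)]
        inj_onD[OF f(1) _ V(2) V(3)] inj_onD[OF f(1) _ V(2) V(4)] by auto
    have C: "c (f k) \<in> {x,y}" if "k \<in> twoK2_V" for k using f(2) that by auto
    obtain i j where ij: "1 \<le> i" "i \<le> K" "1 \<le> j" "j \<le> K" "{f 0, f 1} = {i,i+K}" "{f 2, f 3} = {j,j+K}"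
      using two_pendant[OF E D] by blast
    have a1: "c ` {f 0, f 1} \<subseteq> {x,y}" and a2: "c ` {f 2, f 3} \<subseteq> {x,y}" using C V by auto
    have b1: "c ` {f 0, f 1} = h i" using ij(5) cset[OF ij(1,2)] by simp
    have b2: "c ` {f 2, f 3} = h j" using ij(6) cset[OF ij(3,4)] by simp
    have hsub: "h i \<subseteq> {x,y}" "h j \<subseteq> {x,y}"
      using ssubst[OF b1[symmetric], of "\<lambda>S. S \<subseteq> {x,y}", OF a1]
        ssubst[OF b2[symmetric], of "\<lambda>S. S \<subseteq> {x,y}", OF a2] by simp_all
    have cxy: "card {x,y} = 2" using xy by simp
    have "h i = {x,y}" using card_subset_eq[of "{x,y}" "h i"] hsub(1) S2_facts(5)[OF hi[OF ij(1,2)]] cxy by simp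
    moreover have "h j = {x,y}" using card_subset_eq[of "{x,y}" "h j"] hsub(2) S2_facts(5)[OF hi[OF ij(3,4)]] cxy by simp
    ultimately have "h i = h j" by simp
    then have "i = j" using inj_onD[OF h(2)] ij(1-4) by simp
    then have "{f 0, f 1} = {f 2, f 3}" using ij by simp
    then show False using D by (auto simp: doubleton_eq_iff)
  qed
  show ?thesis using rng proper avoid unfolding H_avoiding_coloring_def by blast
qed


lemma ceil_part:
  fixes K t :: nat
  assumes a: "2*K \<le> (t+2)*(t+1)" and b: "(t+1)*t < 2*K"
  shows "\<lceil>sqrt (real (2*K+1) - 3/4) + 1/2\<rceil> = int (t+2)"
proof -
  have a': "real (2*K) \<le> real ((t+2)*(t+1))" using a by (simp only: of_nat_le_iff)
  have b': "real ((t+1)*t) < real (2*K)" using b by (simp only: of_nat_less_iff)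
  have "sqrt (real (2*K+1) - 3/4) \<le> real t + 3/2"
    by (rule real_le_lsqrt) (use a' in \<open>auto simp: power2_eq_square algebra_simps\<close>)
  moreover have "real t + 1/2 < sqrt (real (2*K+1) - 3/4)"
    by (rule real_less_rsqrt) (use b' in \<open>auto simp: power2_eq_square algebra_simps\<close>)
  ultimately show ?thesis unfolding ceiling_eq_iff by simp
qed

theorem corollary4:
  fixes n :: nat
  assumes "n \<ge> 3" and "odd n"
  shows "int (chi_H twoK2_V twoK2_E (sub_star_V ((n - 1) div 2)) (sub_star_E ((n - 1) div 2)))
           = \<lceil>sqrt (real n - 3/4) + 1/2\<rceil>"
proof -
  define K where "K = (n - 1) div 2"
  have nK: "n = 2*K+1" and K1: "1 \<le> K" using assms unfolding K_def by (auto elim: oddE)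
  define m where "m = (LEAST m. K \<le> m choose 2)"
  have wit: "K \<le> (K+1) choose 2"
  proof -
    have "2*K \<le> (K+1)*K" using K1 by simp
    then have "K \<le> (K+1)*K div 2" by linarith
    then show ?thesis by (simp add: choose_two)
  qed
  have hm: "K \<le> m choose 2" unfolding m_def by (rule LeastI[of _ "K+1"]) (rule wit)
  have m2: "m \<ge> 2"
  proof (rule ccontr)
    assume "\<not> m \<ge> 2"
    then have "m choose 2 = 0" by (simp add: choose_two)
    then show False using hm K1 by linarith
  qed
  have hm': "\<not> K \<le> (m-1) choose 2"
    unfolding m_def by (rule not_less_Least) (use m2 m_def in simp)
  have chi: "chi_H twoK2_V twoK2_E (sub_star_V K) (sub_star_E K) = m"
    unfolding chi_H_def
  proof (rule Least_equality)
    show "\<exists>c. c ` sub_star_V K \<subseteq> {..<m} \<and> H_avoiding_coloring twoK2_V twoK2_E (sub_star_V K) (sub_star_E K) c"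
      by (rule upper[OF K1 hm])
  next
    fix j assume "\<exists>c. c ` sub_star_V K \<subseteq> {..<j} \<and> H_avoiding_coloring twoK2_V twoK2_E (sub_star_V K) (sub_star_E K) c"
    then have "K \<le> j choose 2" using lower by blast
    then show "m \<le> j" unfolding m_def by (rule Least_le)
  qed
  obtain t where t: "m = t+2" using m2 by (metis add.commute le_Suc_ex)
  have a: "2*K \<le> (t+2)*(t+1)"
  proof -
    have "K \<le> (t+2)*(t+1) div 2" using hm t by (simp add: choose_two)
    then show ?thesis by linarith
  qed
  have b: "(t+1)*t < 2*K"
  proof -
    have "\<not> K \<le> (t+1)*t div 2" using hm' t by (simp add: choose_two)
    then show ?thesis by linarith
  qed
  have "\<lceil>sqrt (real (2*K+1) - 3/4) + 1/2\<rceil> = int (t+2)" by (rule ceil_part[OF a b])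
  then show ?thesis using chi t nK unfolding K_def[symmetric] by simp
qed

end
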